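(* Let $\mathcal{H}$ be a hypothesis set of functions $h\colon\mathcal{X}\times(\mathcal{Y}\cup\{n+1\})\to\mathbb{R}$, let $c\in(0,1)$, and let $\ell$ be a loss function on $\mathcal{H}\times\mathcal{X}\times(\mathcal{Y}\cup\{n+1\})$. Assume that $\ell$ admits an $\mathcal{H}$-consistency bound with respect to the multi-class zero-one loss $\ell_{0-1}$ (over the $n+1$ labels $\mathcal{Y}\cup\{n+1\}$) with a concave function $\Gamma$, that is, for every distribution over $\mathcal{X}\times(\mathcal{Y}\cup\{n+1\})$ and all $h\in\mathcal{H}$, \[ \mathcal{E}_{\ell_{0-1}}(h)-\mathcal{E}^*_{\ell_{0-1}}(\mathcal{H})+\mathcal{M}_{\ell_{0-1}}(\mathcal{H})\le\Gamma\big(\mathcal{E}_{\ell}(h)-\mathcal{E}^*_{\ell}(\mathcal{H})+\mathcal{M}_{\ell}(\mathcal{H})\big). \] Define $\mathsf{L}(h,x,y)=\ell(h,x,y)+(1-c)\,\ell(h,x,n+1)$ for $(x,y)\in\mathcal{X}\times\mathcal{Y}$. Then for every distribution $\mathcal{D}$ over $\mathcal{X}\times\mathcal{Y}$ and all $h\in\mathcal{H}$, \[ \mathcal{E}_{\mathsf{L}_{\mathrm{abs}}}(h)-\mathcal{E}^*_{\mathsf{L}_{\mathrm{abs}}}(\mathcal{H})+\mathcal{M}_{\mathsf{L}_{\mathrm{abs}}}(\mathcal{H})\le(2-c)\,\Gamma\Big(\frac{\mathcal{E}_{\mathsf{L}}(h)-\mathcal{E}^*_{\mathsf{L}}(\mathcal{H})+\mathcal{M}_{\mathsf{L}}(\mathcal{H})}{2-c}\Big).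 \]
   Context: Let $\mathcal{X}$ be an input space and $\mathcal{Y}=\{1,\dots,n\}$ with $n\ge 2$. For a distribution $\mathcal{D}$ on $\mathcal{X}\times\mathcal{Y}$, $p(x,y)=\mathcal{D}(Y=y\mid X=x)$. For $h\colon\mathcal{X}\times(\mathcal{Y}\cup\{n+1\})\to\mathbb{R}$ and $x\in\mathcal{X}$, the predicted label $\mathsf{h}(x)$ is $n+1$ if $h(x,n+1)\ge\max_{y\in\mathcal{Y}}h(x,y)$; otherwise $\mathsf{h}(x)=\operatorname{argmax}_{y\in\mathcal{Y}}h(x,y)$, with ties broken by a fixed deterministic rule. The multi-class zero-one loss over $\mathcal{Y}\cup\{n+1\}$ is $\ell_{0-1}(h,x,y)=\mathbb{1}_{\mathsf{h}(x)\neq y}$. The score-based abstention loss with constant cost $c\in(0,1)$ is $\mathsf{L}_{\mathrm{abs}}(h,x,y)=\mathbb{1}_{\mathsf{h}(x)\neq y}\mathbb{1}_{\mathsf{h}(x)\neq n+1}+c\,\mathbb{1}_{\mathsf{h}(x)=n+1}$. For a loss $\mathsf{L}$ and a given distribution: $\mathcal{E}_{\mathsf{L}}(h)=\mathbb{E}_{(x,y)}[\mathsf{L}(h,x,y)]$, $\mathcal{E}^*_{\mathsf{L}}(\mathcal{H})=\inf_{h\in\mathcal{H}}\mathcal{E}_{\mathsf{L}}(h)$, and the minimizability gap $\mathcal{M}_{\mathsf{L}}(\mathcal{H})=\mathcal{E}^*_{\mathsf{L}}(\mathcal{H})-\mathbb{E}_x\big[\inf_{h\in\mathcal{H}}\mathbb{E}_y[\mathsf{L}(h,X,y)\mid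 X=x]\big]$. *)

theory Defs
  imports "HOL-Probability.Probability"
begin

text \<open>Labels: \<Y> = {1..n} (natural numbers), the abstention label is n+1.
  A scoring function is h :: 'x \<Rightarrow> nat \<Rightarrow> real; only its values on labels in {1..n+1} matter.\<close>

type_synonym 'x scorer = "'x \<Rightarrow> nat \<Rightarrow> real"
type_synonym 'x loss = "'x scorer \<Rightarrow> 'x \<Rightarrow> nat \<Rightarrow> real"

definition pred_label :: "nat \<Rightarrow> 'x scorer \<Rightarrow> 'x \<Rightarrow> nat" where
  "pred_label n h x =
     (let m = Max ((\<lambda>y. h x y) ` {1..n}) in
      if h x (n+1) \<ge> m then n+1 else (LEAST y. y \<in> {1..n} \<and> h x y = m))"

definition zero_one_loss :: "nat \<Rightarrow> 'x loss" where
  "zero_one_loss n h x y = (if pred_label n h x \<noteq> y then 1 else 0)"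

definition abs_loss :: "real \<Rightarrow> nat \<Rightarrow> 'x loss" where
  "abs_loss c n h x y =
     (if pred_label n h x \<noteq> y \<and> pred_label n h x \<noteq> n+1 then 1 else 0)
     + c * (if pred_label n h x = n+1 then 1 else 0)"

text \<open>A distribution on X \<times> Ys, represented by its X-marginal \<mu> (a probability
  measure on the fixed measurable space Mx) and the conditional probabilities
  p x y = D(Y = y | X = x).\<close>
definition is_dist :: "'x measure \<Rightarrow> nat set \<Rightarrow> 'x measure \<Rightarrow> ('x \<Rightarrow> nat \<Rightarrow> real) \<Rightarrow> bool" where
  "is_dist Mx Ys \<mu> p \<longleftrightarrow>
     prob_space \<mu> \<and> sets \<mu> = sets Mx \<and>
     (\<forall>y\<in>Ys. (\<lambda>x. p x y) \<in> borel_measurable Mx) \<and>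
     (\<forall>x\<in>space \<mu>. (\<forall>y\<in>Ys. 0 \<le> p x y) \<and> (\<Sum>y\<in>Ys. p x y) = 1)"

definition cond_risk :: "nat set \<Rightarrow> ('x \<Rightarrow> nat \<Rightarrow> real) \<Rightarrow> 'x loss \<Rightarrow> 'x scorer \<Rightarrow> 'x \<Rightarrow> real" where
  "cond_risk Ys p L h x = (\<Sum>y\<in>Ys. p x y * L h x y)"

definition risk :: "'x measure \<Rightarrow> nat set \<Rightarrow> ('x \<Rightarrow> nat \<Rightarrow> real) \<Rightarrow> 'x loss \<Rightarrow> 'x scorer \<Rightarrow> real" where
  "risk \<mu> Ys p L h = (\<integral>x. cond_risk Ys p L h x \<partial>\<mu>)"

definition best_risk :: "'x measure \<Rightarrow> nat set \<Rightarrow> ('x \<Rightarrow> nat \<Rightarrow> real) \<Rightarrow> 'x loss \<Rightarrow> 'x scorer set \<Rightarrow> real" where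
  "best_risk \<mu> Ys p L H = (INF h\<in>H. risk \<mu> Ys p L h)"

definition min_gap :: "'x measure \<Rightarrow> nat set \<Rightarrow> ('x \<Rightarrow> nat \<Rightarrow> real) \<Rightarrow> 'x loss \<Rightarrow> 'x scorer set \<Rightarrow> real" where
  "min_gap \<mu> Ys p L H =
     best_risk \<mu> Ys p L H - (\<integral>x. (INF h\<in>H. cond_risk Ys p L h x) \<partial>\<mu>)"

definition regret_gap :: "'x measure \<Rightarrow> nat set \<Rightarrow> ('x \<Rightarrow> nat \<Rightarrow> real) \<Rightarrow> 'x loss \<Rightarrow> 'x scorer set \<Rightarrow> 'x scorer \<Rightarrow> real" where
  "regret_gap \<mu> Ys p L H h = risk \<mu> Ys p L h - best_risk \<mu> Ys p L H + min_gap \<mu> Ys p L H"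

end

theory Submission
  imports Defs
begin

lemma pred_label_meas:
  assumes hm: "\<And>y. (\<lambda>x. h x y) \<in> borel_measurable M"
  shows "(\<lambda>x. pred_label n h x) \<in> measurable M (count_space UNIV)"
proof -
  have m: "(\<lambda>x. Max ((\<lambda>y. h x y) ` {1..n})) \<in> borel_measurable M"
    by (rule borel_measurable_Max) (auto intro: hm)
  note [measurable] = m hm
  show ?thesis unfolding pred_label_def Let_def by measurable
qed

lemma zo_meas:
  assumes hm: "\<And>y. (\<lambda>x. h x y) \<in> borel_measurable M"
  shows "(\<lambda>x. zero_one_loss n h x y) \<in> borel_measurable M"
proof -
  note [measurable] = pred_label_meas[OF hm]
  show ?thesis unfolding zero_one_loss_def by measurable
qed

lemma INF_affine:
  fixes f :: "'a \<Rightarrow> real"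
  assumes ne: "H \<noteq> {}" and lb: "\<forall>h\<in>H. b \<le> f h" and a: "0 < a"
  shows "(INF h\<in>H. a * f h + d) = a * (INF h\<in>H. f h) + d"
proof (rule antisym)
  have bf: "bdd_below (f ` H)" using lb by (auto intro: bdd_belowI)
  have bg: "bdd_below ((\<lambda>h. a * f h + d) ` H)" using lb a
    by (intro bdd_belowI[where m="a*b+d"]) (auto intro: mult_left_mono)
  show "a * (INF h\<in>H. f h) + d \<le> (INF h\<in>H. a * f h + d)"
  proof (rule cINF_greatest[OF ne])
    fix h assume "h \<in> H"
    then have "(INF h\<in>H. f h) \<le> f h" by (rule cINF_lower[OF bf])
    then show "a * (INF h\<in>H. f h) + d \<le> a * f h + d" using a by simp
  qed
  have "((INF h\<in>H. a * f h + d) - d) / a \<le> (INF h\<in>H. f h)"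
  proof (rule cINF_greatest[OF ne])
    fix h assume "h \<in> H"
    then have "(INF h\<in>H. a * f h + d) \<le> a * f h + d" by (rule cINF_lower[OF bg])
    then show "((INF h\<in>H. a * f h + d) - d) / a \<le> f h" using a by (simp add: field_simps)
  qed
  then show "(INF h\<in>H. a * f h + d) \<le> a * (INF h\<in>H. f h) + d" using a by (simp add: field_simps)
qed

theorem theorem3:
  fixes Mx :: "'x measure" and H :: "'x scorer set" and l :: "'x loss"
    and n :: nat and c :: real and \<Gamma> :: "real \<Rightarrow> real"
  assumes n2: "n \<ge> 2"
    and c_pos: "0 < c" and c_lt1: "c < 1"
    and H_meas: "\<forall>h\<in>H. \<forall>y. (\<lambda>x. h x y) \<in> borel_measurable Mx"
    and l_nonneg: "\<forall>h x y. 0 \<le> l h x y"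
    and \<Gamma>_concave: "concave_on {0..} \<Gamma>"
    and hcb: "\<forall>\<mu> p. is_dist Mx {1..n+1} \<mu> p \<longrightarrow>
               (\<forall>h\<in>H. regret_gap \<mu> {1..n+1} p (zero_one_loss n) H h
                        \<le> \<Gamma> (regret_gap \<mu> {1..n+1} p l H h))"
  shows "\<forall>\<mu> p. is_dist Mx {1..n} \<mu> p \<longrightarrow>
           (\<forall>h\<in>H. regret_gap \<mu> {1..n} p (abs_loss c n) H h
              \<le> (2 - c) * \<Gamma> (regret_gap \<mu> {1..n} p
                     (\<lambda>h x y. l h x y + (1 - c) * l h x (n+1)) H h / (2 - c)))"
proof (intro allI impI ballI)
  fix \<mu> p h assume D: "is_dist Mx {1..n} \<mu> p" and hH: "h \<in> H"
  define k where "k = 2 - c"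
  define p' where "p' = (\<lambda>x y. if y = n+1 then (1-c)/k else p x y / k)"
  define Lc where "Lc = (\<lambda>h x y. l h x y + (1 - c) * l h x (n+1))"
  have k: "k > 1" using c_lt1 by (simp add: k_def)
  have ps: "prob_space \<mu>" and sets_eq: "sets \<mu> = sets Mx"
    and pm: "\<forall>y\<in>{1..n}. (\<lambda>x. p x y) \<in> borel_measurable Mx"
    and pp: "\<forall>x\<in>space \<mu>. (\<forall>y\<in>{1..n}. 0 \<le> p x y) \<and> (\<Sum>y\<in>{1..n}. p x y) = 1"
    using D by (auto simp: is_dist_def)
  interpret prob_space \<mu> by (rule ps)
  have ins: "{1..n+1} = insert (n+1) {1..n}" by auto
  have D': "is_dist Mx {1..n+1} \<mu> p'"
    unfolding is_dist_def
  proof (intro conjI ballI)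
    fix y assume y: "y \<in> {1..n+1}"
    show "(\<lambda>x. p' x y) \<in> borel_measurable Mx"
    proof (cases "y = n+1")
      case True then show ?thesis by (simp add: p'_def)
    next
      case False then have "y \<in> {1..n}" using y by auto
      then have "(\<lambda>x. p x y) \<in> borel_measurable Mx" using pm by blast
      then show ?thesis using False by (simp add: p'_def)
    qed
  next
    fix x assume x: "x \<in> space \<mu>"
    fix y assume "y \<in> {1..n+1}"
    then show "0 \<le> p' x y" using pp x k c_lt1 by (auto simp: p'_def)
  next
    fix x assume x: "x \<in> space \<mu>"
    have "(\<Sum>y\<in>{1..n+1}. p' x y) = (1-c)/k + (\<Sum>y\<in>{1..n}. p x y / k)"
      unfolding ins by (subst sum.insert) (auto simp: p'_def intro!: sum.cong)
    also have "\<dots> = (1-c)/k + 1/k" using pp x by (simp add: sum_divide_distrib[symmetric])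
    also have "\<dots> = 1" using k by (simp add: k_def field_simps)
    finally show "(\<Sum>y\<in>{1..n+1}. p' x y) = 1" .
  qed (use ps sets_eq in auto)
  have gapeq: "\<And>Ys q L. regret_gap \<mu> Ys q L H h = risk \<mu> Ys q L h - (\<integral>x. (INF g\<in>H. cond_risk Ys q L g x) \<partial>\<mu>)"
    by (simp add: regret_gap_def min_gap_def)
  have abs_eq: "cond_risk {1..n} p (abs_loss c n) g x = k * cond_risk {1..n+1} p' (zero_one_loss n) g x - (1-c)"
    if x: "x \<in> space \<mu>" for g x
  proof -
    have s1: "(\<Sum>y\<in>{1..n}. p x y) = 1" using pp x by auto
    have c01: "cond_risk {1..n+1} p' (zero_one_loss n) g x
        = (1-c)/k * zero_one_loss n g x (n+1) + (\<Sum>y\<in>{1..n}. p x y * zero_one_loss n g x y) / k"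
      unfolding cond_risk_def ins
      by (subst sum.insert) (auto simp: p'_def sum_divide_distrib intro!: sum.cong)
    show ?thesis
    proof (cases "pred_label n g x = n+1")
      case True
      have "cond_risk {1..n} p (abs_loss c n) g x = (\<Sum>y\<in>{1..n}. p x y * c)"
        unfolding cond_risk_def by (rule sum.cong) (auto simp: abs_loss_def True)
      also have "\<dots> = c" using s1 by (simp add: sum_distrib_right[symmetric])
      finally have a: "cond_risk {1..n} p (abs_loss c n) g x = c" .
      have "(\<Sum>y\<in>{1..n}. p x y * zero_one_loss n g x y) = (\<Sum>y\<in>{1..n}. p x y)"
        by (rule sum.cong) (auto simp: zero_one_loss_def True)
      then have "cond_risk {1..n+1} p' (zero_one_loss n) g x = 1/k"
        using c01 s1 by (simp add: zero_one_loss_def True)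
      then show ?thesis using a k by (simp add: k_def)
    next
      case False
      have "cond_risk {1..n} p (abs_loss c n) g x = (\<Sum>y\<in>{1..n}. p x y * zero_one_loss n g x y)"
        unfolding cond_risk_def by (rule sum.cong) (use False in \<open>auto simp: abs_loss_def zero_one_loss_def\<close>)
      moreover have "zero_one_loss n g x (n+1) = 1" using False by (simp add: zero_one_loss_def)
      ultimately have A: "cond_risk {1..n} p (abs_loss c n) g x = (\<Sum>y\<in>{1..n}. p x y * zero_one_loss n g x y)"
        and B: "cond_risk {1..n+1} p' (zero_one_loss n) g x = (1-c)/k + (\<Sum>y\<in>{1..n}. p x y * zero_one_loss n g x y) / k"
        using c01 by simp_all
      have kne: "k \<noteq> 0" using k by simp
      have "k * ((1-c)/k + (\<Sum>y\<in>{1..n}. p x y * zero_one_loss n g x y) / k) = (1-c) + (\<Sum>y\<in>{1..n}. p x y * zero_one_loss n g x y)"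
        using kne by (simp add: distrib_left)
      then show ?thesis unfolding A B by simp
    qed
  qed
  have L_eq: "cond_risk {1..n} p Lc g x = k * cond_risk {1..n+1} p' l g x"
    if x: "x \<in> space \<mu>" for g x
  proof -
    have s1: "(\<Sum>y\<in>{1..n}. p x y) = 1" using pp x by auto
    have "cond_risk {1..n} p Lc g x = (\<Sum>y\<in>{1..n}. p x y * l g x y) + (\<Sum>y\<in>{1..n}. p x y) * ((1-c) * l g x (n+1))"
      unfolding cond_risk_def Lc_def by (simp add: distrib_left sum.distrib sum_distrib_right)
    also have "\<dots> = (\<Sum>y\<in>{1..n}. p x y * l g x y) + (1-c) * l g x (n+1)" using s1 by simp
    also have "\<dots> = k * cond_risk {1..n+1} p' l g x"
      unfolding cond_risk_def ins using k
      by (subst sum.insert) (auto simp: p'_def sum_distrib_left field_simps intro!: sum.cong)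
    finally show ?thesis .
  qed
  have mc: "borel_measurable \<mu> = borel_measurable Mx" by (rule measurable_cong_sets[OF sets_eq refl])
  have p'm: "(\<lambda>x. p' x y) \<in> borel_measurable \<mu>" if "y \<in> {1..n+1}" for y
    using D' that unfolding is_dist_def mc by simp
  have zm: "(\<lambda>x. zero_one_loss n h x y) \<in> borel_measurable \<mu>" for y
    using zo_meas[of h Mx n y] H_meas hH unfolding mc by simp
  have cm: "(\<lambda>x. cond_risk {1..n+1} p' (zero_one_loss n) h x) \<in> borel_measurable \<mu>"
    unfolding cond_risk_def using p'm zm by (intro borel_measurable_sum borel_measurable_times) auto
  have p'nn: "\<forall>x\<in>space \<mu>. \<forall>y\<in>{1..n+1}. 0 \<le> p' x y" and p's: "\<forall>x\<in>space \<mu>. (\<Sum>y\<in>{1..n+1}. p' x y) = 1"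
    using D' by (auto simp: is_dist_def)
  have c01nn: "0 \<le> cond_risk {1..n+1} p' (zero_one_loss n) g x" if "x \<in> space \<mu>" for g x
    unfolding cond_risk_def using p'nn that by (intro sum_nonneg) (auto simp: zero_one_loss_def)
  have c01le: "cond_risk {1..n+1} p' (zero_one_loss n) g x \<le> 1" if "x \<in> space \<mu>" for g x
  proof -
    have "cond_risk {1..n+1} p' (zero_one_loss n) g x \<le> (\<Sum>y\<in>{1..n+1}. p' x y)"
      unfolding cond_risk_def using p'nn that by (intro sum_mono) (auto simp: zero_one_loss_def)
    then show ?thesis using p's that by simp
  qed
  have ci: "integrable \<mu> (\<lambda>x. cond_risk {1..n+1} p' (zero_one_loss n) h x)"
    by (rule integrable_const_bound[where B=1]) (use c01nn c01le cm in auto)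
  have risk_abs: "risk \<mu> {1..n} p (abs_loss c n) h = k * risk \<mu> {1..n+1} p' (zero_one_loss n) h - (1-c)"
  proof -
    have "risk \<mu> {1..n} p (abs_loss c n) h = (\<integral>x. k * cond_risk {1..n+1} p' (zero_one_loss n) h x - (1-c) \<partial>\<mu>)"
      unfolding risk_def by (rule Bochner_Integration.integral_cong[OF refl abs_eq])
    also have "\<dots> = k * risk \<mu> {1..n+1} p' (zero_one_loss n) h - (1-c)"
      unfolding risk_def using ci by (subst Bochner_Integration.integral_diff) (auto simp: prob_space)
    finally show ?thesis .
  qed
  have Hne: "H \<noteq> {}" using hH by auto
  have inf_abs: "(INF g\<in>H. cond_risk {1..n} p (abs_loss c n) g x) = k * (INF g\<in>H. cond_risk {1..n+1} p' (zero_one_loss n) g x) - (1-c)"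
    if x: "x \<in> space \<mu>" for x
  proof -
    have "(INF g\<in>H. cond_risk {1..n} p (abs_loss c n) g x) = (INF g\<in>H. k * cond_risk {1..n+1} p' (zero_one_loss n) g x + (-(1-c)))"
      by (intro INF_cong refl) (use abs_eq[OF x] in simp)
    also have "\<dots> = k * (INF g\<in>H. cond_risk {1..n+1} p' (zero_one_loss n) g x) + (-(1-c))"
      by (rule INF_affine[OF Hne, where b=0]) (use c01nn x k in auto)
    finally show ?thesis by simp
  qed
  define I01 where "I01 = (\<lambda>x. INF g\<in>H. cond_risk {1..n+1} p' (zero_one_loss n) g x)"
  have intineq: "(\<integral>x. (INF g\<in>H. cond_risk {1..n} p (abs_loss c n) g x) \<partial>\<mu>) \<ge> k * (\<integral>x. I01 x \<partial>\<mu>) - (1-c)"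
  proof (cases "integrable \<mu> I01")
    case True
    have "(\<integral>x. (INF g\<in>H. cond_risk {1..n} p (abs_loss c n) g x) \<partial>\<mu>) = (\<integral>x. k * I01 x - (1-c) \<partial>\<mu>)"
      unfolding I01_def by (rule Bochner_Integration.integral_cong[OF refl inf_abs])
    also have "\<dots> = k * (\<integral>x. I01 x \<partial>\<mu>) - (1-c)"
      using True by (subst Bochner_Integration.integral_diff) (auto simp: prob_space)
    finally show ?thesis by simp
  next
    case False
    have "\<not> integrable \<mu> (\<lambda>x. (INF g\<in>H. cond_risk {1..n} p (abs_loss c n) g x))"
    proof
      assume a: "integrable \<mu> (\<lambda>x. (INF g\<in>H. cond_risk {1..n} p (abs_loss c n) g x))"
      have "integrable \<mu> (\<lambda>x. (1/k) * ((INF g\<in>H. cond_risk {1..n} p (abs_loss c n) g x) + (1-c)))"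
        using a by (intro integrable_mult_right Bochner_Integration.integrable_add) auto
      moreover have "integrable \<mu> (\<lambda>x. (1/k) * ((INF g\<in>H. cond_risk {1..n} p (abs_loss c n) g x) + (1-c))) = integrable \<mu> I01"
      proof (rule Bochner_Integration.integrable_cong[OF refl])
        fix x assume x: "x \<in> space \<mu>"
        show "(1/k) * ((INF g\<in>H. cond_risk {1..n} p (abs_loss c n) g x) + (1-c)) = I01 x"
          unfolding inf_abs[OF x] I01_def using k by simp
      qed
      ultimately show False using False by simp
    qed
    then show ?thesis using False c_lt1 by (simp add: not_integrable_integral_eq)
  qed
  have gap_abs: "regret_gap \<mu> {1..n} p (abs_loss c n) H h \<le> k * regret_gap \<mu> {1..n+1} p' (zero_one_loss n) H h"
    unfolding gapeq risk_abs using intineq by (simp add: I01_def right_diff_distrib)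
  have inf_L: "(INF g\<in>H. cond_risk {1..n} p Lc g x) = k * (INF g\<in>H. cond_risk {1..n+1} p' l g x)"
    if x: "x \<in> space \<mu>" for x
  proof -
    have "(INF g\<in>H. cond_risk {1..n} p Lc g x) = (INF g\<in>H. k * cond_risk {1..n+1} p' l g x + 0)"
      using L_eq[OF x] by simp
    also have "\<dots> = k * (INF g\<in>H. cond_risk {1..n+1} p' l g x) + 0"
    proof (rule INF_affine[OF Hne, where b=0])
      show "\<forall>g\<in>H. 0 \<le> cond_risk {1..n+1} p' l g x"
        unfolding cond_risk_def using p'nn x l_nonneg by (intro ballI sum_nonneg mult_nonneg_nonneg) auto
    qed (use k in auto)
    finally show ?thesis by simp
  qed
  have gap_L: "regret_gap \<mu> {1..n} p Lc H h = k * regret_gap \<mu> {1..n+1} p' l H h"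
  proof -
    have r: "risk \<mu> {1..n} p Lc h = k * risk \<mu> {1..n+1} p' l h"
      unfolding risk_def by (subst integral_mult_right_zero[symmetric]) (rule Bochner_Integration.integral_cong[OF refl L_eq])
    have i: "(\<integral>x. (INF g\<in>H. cond_risk {1..n} p Lc g x) \<partial>\<mu>) = k * (\<integral>x. (INF g\<in>H. cond_risk {1..n+1} p' l g x) \<partial>\<mu>)"
      by (subst integral_mult_right_zero[symmetric]) (rule Bochner_Integration.integral_cong[OF refl inf_L])
    show ?thesis unfolding gapeq r i by (simp add: right_diff_distrib)
  qed
  have "regret_gap \<mu> {1..n+1} p' (zero_one_loss n) H h \<le> \<Gamma> (regret_gap \<mu> {1..n+1} p' l H h)"
    using hcb D' hH by blast
  also have "regret_gap \<mu> {1..n+1} p' l H h = regret_gap \<mu> {1..n} p Lc H h / k"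
    using gap_L k by simp
  finally have "k * regret_gap \<mu> {1..n+1} p' (zero_one_loss n) H h \<le> k * \<Gamma> (regret_gap \<mu> {1..n} p Lc H h / k)"
    using k by simp
  with gap_abs show "regret_gap \<mu> {1..n} p (abs_loss c n) H h
              \<le> (2 - c) * \<Gamma> (regret_gap \<mu> {1..n} p
                     (\<lambda>h x y. l h x y + (1 - c) * l h x (n+1)) H h / (2 - c))"
    unfolding k_def Lc_def by simp
qed

end
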